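(* There is an absolute constant $C>0$ such that every Boolean matrix $F\in\{0,1\}^{\mathcal X\times\mathcal Y}$ (with $\mathcal X,\mathcal Y$ finite nonempty) satisfies $\log_2\!\big(1/\mathrm{wrect}(F)\big)\le C\cdot \mathsf{N}(F)$; that is, $\mathsf{N}(F)\gtrsim \log(1/\mathrm{wrect}(F))$.
   Context: A combinatorial rectangle is a set $S\times T$ with $S\subseteq\mathcal X$, $T\subseteq\mathcal Y$; it is monochromatic in $F$ if $F$ is constant on it. The weighted rectangle ratio is $\mathrm{wrect}(F)=\inf_{\mu}\max_R \mu(R)$, where the infimum is over all product probability measures $\mu=\mu_{\mathcal X}\times\mu_{\mathcal Y}$ on $\mathcal X\times\mathcal Y$ and the maximum is over monochromatic rectangles $R$ of $F$. A deterministic protocol is a binary tree in which each internal node is owned by Alice (labelled by a function $\mathcal X\to\{0,1\}$) or Bob (labelled by a function $\mathcal Y\to\{0,1\}$); on input $(x,y)$ the players follow the path determined by these bits, and the leaf reached gives the output in $\{0,1\}$; its cost is the tree height. A nondeterministic protocol consists of a family of deterministic protocols $\pi_a$ indexed by advice strings $a$ of some length $k$; it computes $F$ if for all $(x,y)$: $F(x,y)=1$ iff there exists $a$ with $\pi_a(x,y)=1$. Its cost is $k$ plus the maximum cost of $\pi_a$ over all $a$. $\mathsf{N}(F)$ is the minimum cost of a nondeterministic protocol computing $F$. Logarithms are base 2. *)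

theory Defs
  imports Complex_Main
begin

text \<open>Inputs are drawn from finite nonempty carriers X, Y of natural numbers
(every finite set embeds into nat, so this is no loss of generality and lets the
constant C be quantified outside all instances).\<close>

definition prob_dist :: "nat set \<Rightarrow> (nat \<Rightarrow> real) \<Rightarrow> bool" where
  "prob_dist X p \<longleftrightarrow> (\<forall>x\<in>X. 0 \<le> p x) \<and> sum p X = 1"

definition mono_rect :: "nat set \<Rightarrow> nat set \<Rightarrow> (nat \<Rightarrow> nat \<Rightarrow> bool) \<Rightarrow> nat set \<Rightarrow> nat set \<Rightarrow> bool" where
  "mono_rect X Y F S T \<longleftrightarrow> S \<subseteq> X \<and> T \<subseteq> Y \<and> (\<exists>c. \<forall>x\<in>S. \<forall>y\<in>T. F x y = c)"

definition wrect :: "nat set \<Rightarrow> nat set \<Rightarrow> (nat \<Rightarrow> nat \<Rightarrow> bool) \<Rightarrow> real" where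
  "wrect X Y F = Inf {Max {sum p S * sum q T | S T. mono_rect X Y F S T} | p q.
                        prob_dist X p \<and> prob_dist Y q}"

datatype proto = Leaf bool
  | Alice "nat \<Rightarrow> bool" proto proto
  | Bob "nat \<Rightarrow> bool" proto proto

fun run :: "proto \<Rightarrow> nat \<Rightarrow> nat \<Rightarrow> bool" where
  "run (Leaf b) x y = b"
| "run (Alice f l r) x y = (if f x then run r x y else run l x y)"
| "run (Bob g l r) x y = (if g y then run r x y else run l x y)"

fun height :: "proto \<Rightarrow> nat" where
  "height (Leaf b) = 0"
| "height (Alice f l r) = Suc (max (height l) (height r))"
| "height (Bob g l r) = Suc (max (height l) (height r))"

text \<open>A nondeterministic protocol: family of deterministic protocols indexed by
advice strings of length k.\<close>
definition nd_computes :: "nat set \<Rightarrow> nat set \<Rightarrow> (nat \<Rightarrow> nat \<Rightarrow> bool) \<Rightarrow> nat \<Rightarrow> (bool list \<Rightarrow> proto) \<Rightarrow> bool" where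
  "nd_computes X Y F k \<pi> \<longleftrightarrow>
     (\<forall>x\<in>X. \<forall>y\<in>Y. F x y \<longleftrightarrow> (\<exists>a. length a = k \<and> run (\<pi> a) x y))"

definition nd_cost :: "nat \<Rightarrow> (bool list \<Rightarrow> proto) \<Rightarrow> nat" where
  "nd_cost k \<pi> = k + Max ((\<lambda>a. height (\<pi> a)) ` {a. length a = k})"

definition NCC :: "nat set \<Rightarrow> nat set \<Rightarrow> (nat \<Rightarrow> nat \<Rightarrow> bool) \<Rightarrow> nat" where
  "NCC X Y F = (LEAST c. \<exists>k \<pi>. nd_computes X Y F k \<pi> \<and> c = nd_cost k \<pi>)"

end

theory Submission
  imports Defs
begin

fun rects :: "proto \<Rightarrow> (nat set \<times> nat set) set" where
  "rects (Leaf b) = (if b then {(UNIV, UNIV)} else {})"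
| "rects (Alice f l r) = (\<lambda>(S,T). (S \<inter> {x. \<not> f x}, T)) ` rects l \<union> (\<lambda>(S,T). (S \<inter> {x. f x}, T)) ` rects r"
| "rects (Bob g l r) = (\<lambda>(S,T). (S, T \<inter> {y. \<not> g y})) ` rects l \<union> (\<lambda>(S,T). (S, T \<inter> {y. g y})) ` rects r"

lemma run_rects: "run \<pi> x y \<longleftrightarrow> (\<exists>S T. (S,T)\<in>rects \<pi> \<and> x\<in>S \<and> y\<in>T)"
proof (induction \<pi>)
  case (Leaf b) then show ?case by simp
next
  case (Alice f l r)
  show ?case
  proof
    assume run: "run (Alice f l r) x y"
    show "\<exists>S T. (S,T)\<in>rects (Alice f l r) \<and> x\<in>S \<and> y\<in>T"
    proof (cases "f x")
      case True
      then obtain S T where ST: "(S,T)\<in>rects r" "x\<in>S" "y\<in>T" using run Alice.IH(2) by auto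
      have "(S \<inter> {x. f x}, T) \<in> rects (Alice f l r)"
        unfolding rects.simps by (rule UnI2, rule image_eqI[of _ _ "(S,T)"]) (simp_all add: ST)
      then show ?thesis using ST True by blast
    next
      case False
      then obtain S T where ST: "(S,T)\<in>rects l" "x\<in>S" "y\<in>T" using run Alice.IH(1) by auto
      have "(S \<inter> {x. \<not> f x}, T) \<in> rects (Alice f l r)"
        unfolding rects.simps by (rule UnI1, rule image_eqI[of _ _ "(S,T)"]) (simp_all add: ST)
      then show ?thesis using ST False by blast
    qed
  next
    assume "\<exists>S T. (S,T)\<in>rects (Alice f l r) \<and> x\<in>S \<and> y\<in>T"
    then obtain S' T' where m: "(S',T')\<in>rects (Alice f l r)" and xy: "x\<in>S'" "y\<in>T'" by blast
    from m show "run (Alice f l r) x y" unfolding rects.simps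
    proof (elim UnE imageE)
      fix p assume p: "p \<in> rects l" "(S', T') = (\<lambda>(S,T). (S \<inter> {x. \<not> f x}, T)) p"
      obtain S T where pST: "p = (S,T)" by (cases p)
      show ?thesis using p xy Alice.IH(1) unfolding pST by auto
    next
      fix p assume p: "p \<in> rects r" "(S', T') = (\<lambda>(S,T). (S \<inter> {x. f x}, T)) p"
      obtain S T where pST: "p = (S,T)" by (cases p)
      show ?thesis using p xy Alice.IH(2) unfolding pST by auto
    qed
  qed
next
  case (Bob f l r)
  show ?case
  proof
    assume run: "run (Bob f l r) x y"
    show "\<exists>S T. (S,T)\<in>rects (Bob f l r) \<and> x\<in>S \<and> y\<in>T"
    proof (cases "f y")
      case True
      then obtain S T where ST: "(S,T)\<in>rects r" "x\<in>S" "y\<in>T" using run Bob.IH(2) by auto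
      have "(S, T \<inter> {y. f y}) \<in> rects (Bob f l r)"
        unfolding rects.simps by (rule UnI2, rule image_eqI[of _ _ "(S,T)"]) (simp_all add: ST)
      then show ?thesis using ST True by blast
    next
      case False
      then obtain S T where ST: "(S,T)\<in>rects l" "x\<in>S" "y\<in>T" using run Bob.IH(1) by auto
      have "(S, T \<inter> {y. \<not> f y}) \<in> rects (Bob f l r)"
        unfolding rects.simps by (rule UnI1, rule image_eqI[of _ _ "(S,T)"]) (simp_all add: ST)
      then show ?thesis using ST False by blast
    qed
  next
    assume "\<exists>S T. (S,T)\<in>rects (Bob f l r) \<and> x\<in>S \<and> y\<in>T"
    then obtain S' T' where m: "(S',T')\<in>rects (Bob f l r)" and xy: "x\<in>S'" "y\<in>T'" by blast
    from m show "run (Bob f l r) x y" unfolding rects.simps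
    proof (elim UnE imageE)
      fix p assume p: "p \<in> rects l" "(S', T') = (\<lambda>(S,T). (S, T \<inter> {y. \<not> f y})) p"
      obtain S T where pST: "p = (S,T)" by (cases p)
      show ?thesis using p xy Bob.IH(1) unfolding pST by auto
    next
      fix p assume p: "p \<in> rects r" "(S', T') = (\<lambda>(S,T). (S, T \<inter> {y. f y})) p"
      obtain S T where pST: "p = (S,T)" by (cases p)
      show ?thesis using p xy Bob.IH(2) unfolding pST by auto
    qed
  qed
qed

lemma finite_rects: "finite (rects \<pi>)"
  by (induction \<pi>) auto

lemma card_rects: "card (rects \<pi>) \<le> 2 ^ height \<pi>"
proof (induction \<pi>)
  case (Leaf b) then show ?case by simp
next
  case (Alice f l r)
  let ?A = "(\<lambda>(S,T). (S \<inter> {x. \<not> f x}, T)) ` rects l"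
  let ?B = "(\<lambda>(S,T). (S \<inter> {x. f x}, T)) ` rects r"
  have "card (?A \<union> ?B) \<le> card ?A + card ?B" by (rule card_Un_le)
  also have "\<dots> \<le> card (rects l) + card (rects r)" by (intro add_mono card_image_le finite_rects)
  also have "\<dots> \<le> 2 ^ height l + 2 ^ height r" using Alice by simp
  also have "\<dots> \<le> 2 ^ max (height l) (height r) + 2 ^ max (height l) (height r)"
    by (intro add_mono power_increasing) auto
  finally show ?case by simp
next
  case (Bob f l r)
  let ?A = "(\<lambda>(S,T). (S, T \<inter> {y. \<not> f y})) ` rects l"
  let ?B = "(\<lambda>(S,T). (S, T \<inter> {y. f y})) ` rects r"
  have "card (?A \<union> ?B) \<le> card ?A + card ?B" by (rule card_Un_le)
  also have "\<dots> \<le> card (rects l) + card (rects r)" by (intro add_mono card_image_le finite_rects)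
  also have "\<dots> \<le> 2 ^ height l + 2 ^ height r" using Bob by simp
  also have "\<dots> \<le> 2 ^ max (height l) (height r) + 2 ^ max (height l) (height r)"
    by (intro add_mono power_increasing) auto
  finally show ?case by simp
qed

lemma sum_union_bound:
  fixes p :: "nat \<Rightarrow> real"
  assumes "finite X" "\<forall>x\<in>X. 0 \<le> p x" "finite I"
  shows "sum p (X \<inter> \<Union>(f ` I)) \<le> (\<Sum>i\<in>I. sum p (X \<inter> f i))"
  using assms(3)
proof (induction I rule: finite_induct)
  case empty then show ?case by simp
next
  case (insert i I)
  have eq: "X \<inter> \<Union>(f ` insert i I) = (X \<inter> f i) \<union> (X \<inter> \<Union>(f ` I))" by auto
  have "sum p ((X \<inter> f i) \<union> (X \<inter> \<Union>(f ` I))) \<le> sum p (X \<inter> f i) + sum p (X \<inter> \<Union>(f ` I))"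
  proof -
    have "sum p ((X \<inter> f i) \<union> (X \<inter> \<Union>(f ` I))) = sum p (X \<inter> f i) + sum p (X \<inter> \<Union>(f ` I)) - sum p ((X \<inter> f i) \<inter> (X \<inter> \<Union>(f ` I)))"
      using assms(1) by (subst sum_Un) auto
    moreover have "0 \<le> sum p ((X \<inter> f i) \<inter> (X \<inter> \<Union>(f ` I)))"
      using assms(2) by (intro sum_nonneg) auto
    ultimately show ?thesis by linarith
  qed
  then show ?case using insert eq by simp
qed

lemma big_rect:
  fixes p q :: "nat \<Rightarrow> real" and n :: nat
  assumes fX: "finite X" and fY: "finite Y" and pX: "prob_dist X p" and qY: "prob_dist Y q"
    and fR: "finite R" and cR: "card R \<le> n" and n1: "n \<ge> 1"
    and cover: "\<forall>x\<in>X. \<forall>y\<in>Y. F x y \<longleftrightarrow> (\<exists>(S,T)\<in>R. x\<in>S \<and> y\<in>T)"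
  shows "\<exists>S T. mono_rect X Y F S T \<and> 1 / (16 * real n ^ 2) \<le> sum p S * sum q T"
proof -
  define \<epsilon> where "\<epsilon> = 1 / (4 * real n)"
  have \<epsilon>pos: "\<epsilon> > 0" using n1 by (simp add: \<epsilon>_def)
  have \<epsilon>sq: "\<epsilon> * \<epsilon> = 1 / (16 * real n ^ 2)" by (simp add: \<epsilon>_def power2_eq_square)
  have p0: "\<forall>x\<in>X. 0 \<le> p x" and p1: "sum p X = 1" using pX by (auto simp: prob_dist_def)
  have q0: "\<forall>x\<in>Y. 0 \<le> q x" and q1: "sum q Y = 1" using qY by (auto simp: prob_dist_def)
  show ?thesis
  proof (cases "\<exists>r\<in>R. sum p (fst r \<inter> X) > \<epsilon> \<and> sum q (snd r \<inter> Y) > \<epsilon>")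
    case True
    then obtain S T where ST: "(S,T) \<in> R" "sum p (S \<inter> X) > \<epsilon>" "sum q (T \<inter> Y) > \<epsilon>" by auto
    have "mono_rect X Y F (S \<inter> X) (T \<inter> Y)"
      unfolding mono_rect_def using cover ST(1) by (intro conjI exI[of _ True]) auto
    moreover have "\<epsilon> * \<epsilon> \<le> sum p (S \<inter> X) * sum q (T \<inter> Y)"
      using ST \<epsilon>pos by (intro mult_mono) auto
    ultimately show ?thesis using \<epsilon>sq by metis
  next
    case False
    define I where "I = {r\<in>R. sum p (fst r \<inter> X) \<le> \<epsilon>}"
    have I1: "\<And>r. r \<in> I \<Longrightarrow> sum p (X \<inter> fst r) \<le> \<epsilon>" by (auto simp: I_def Int_commute)
    have I2: "\<And>r. r \<in> R - I \<Longrightarrow> sum q (Y \<inter> snd r) \<le> \<epsilon>" using False by (auto simp: I_def Int_commute)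
    have fI: "finite I" "finite (R - I)" using fR by (auto simp: I_def)
    have "card I \<le> card R" using fR by (intro card_mono) (auto simp: I_def)
    moreover have "card (R - I) \<le> card R" using fR by (intro card_mono) auto
    ultimately have cI: "card I \<le> n" "card (R - I) \<le> n" using cR by linarith+
    define A where "A = X - \<Union>(fst ` I)"
    define B where "B = Y - \<Union>(snd ` (R - I))"
    have mono: "mono_rect X Y F A B"
      unfolding mono_rect_def
    proof (intro conjI exI[of _ False])
      show "A \<subseteq> X" "B \<subseteq> Y" by (auto simp: A_def B_def)
      show "\<forall>x\<in>A. \<forall>y\<in>B. F x y = False"
      proof (intro ballI)
        fix x y assume xy: "x \<in> A" "y \<in> B"
        show "F x y = False"
        proof (rule ccontr)
          assume "F x y \<noteq> False"
          then obtain S T where "(S,T)\<in>R" "x\<in>S" "y\<in>T" using cover xy by (auto simp: A_def B_def)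
          then show False using xy by (cases "(S,T) \<in> I") (force simp: A_def B_def)+
        qed
      qed
    qed
    have "sum p (X \<inter> \<Union>(fst ` I)) \<le> (\<Sum>i\<in>I. sum p (X \<inter> fst i))"
      by (rule sum_union_bound[OF fX p0 fI(1)])
    also have "\<dots> \<le> (\<Sum>i\<in>I. \<epsilon>)" by (intro sum_mono I1)
    also have "\<dots> = card I * \<epsilon>" by simp
    also have "\<dots> \<le> n * \<epsilon>" using cI \<epsilon>pos by (intro mult_right_mono) auto
    also have "\<dots> = 1/4" using n1 by (simp add: \<epsilon>_def)
    finally have a1: "sum p (X \<inter> \<Union>(fst ` I)) \<le> 1/4" .
    have "sum p A = sum p X - sum p (X \<inter> \<Union>(fst ` I))"
    proof -
      have "A = X - (X \<inter> \<Union>(fst ` I))" by (auto simp: A_def)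
      then show ?thesis using fX by (simp add: sum_diff)
    qed
    hence pA: "sum p A \<ge> 3/4" using a1 p1 by linarith
    have "sum q (Y \<inter> \<Union>(snd ` (R-I))) \<le> (\<Sum>i\<in>R-I. sum q (Y \<inter> snd i))"
      by (rule sum_union_bound[OF fY q0 fI(2)])
    also have "\<dots> \<le> (\<Sum>i\<in>R-I. \<epsilon>)" by (intro sum_mono I2)
    also have "\<dots> = card (R-I) * \<epsilon>" by simp
    also have "\<dots> \<le> n * \<epsilon>" using cI \<epsilon>pos by (intro mult_right_mono) auto
    also have "\<dots> = 1/4" using n1 by (simp add: \<epsilon>_def)
    finally have b1: "sum q (Y \<inter> \<Union>(snd ` (R-I))) \<le> 1/4" .
    have "sum q B = sum q Y - sum q (Y \<inter> \<Union>(snd ` (R-I)))"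
    proof -
      have "B = Y - (Y \<inter> \<Union>(snd ` (R-I)))" by (auto simp: B_def)
      then show ?thesis using fY by (simp add: sum_diff)
    qed
    hence qB: "sum q B \<ge> 3/4" using b1 q1 by linarith
    have "(3/4) * (3/4) \<le> sum p A * sum q B" using pA qB by (intro mult_mono) auto
    moreover have "1 / (16 * real n ^ 2) \<le> 1/16" using n1 by (simp add: field_simps)
    ultimately show ?thesis using mono by (intro exI[of _ A] exI[of _ B]) auto
  qed
qed


fun rowT :: "(nat \<Rightarrow> bool) \<Rightarrow> nat list \<Rightarrow> proto" where
  "rowT g [] = Leaf False"
| "rowT g (y # ys) = Bob (\<lambda>v. v = y) (rowT g ys) (Leaf (g y))"

fun fullT :: "(nat \<Rightarrow> nat \<Rightarrow> bool) \<Rightarrow> nat list \<Rightarrow> nat list \<Rightarrow> proto" where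
  "fullT F [] ys = Leaf False"
| "fullT F (x # xs) ys = Alice (\<lambda>u. u = x) (fullT F xs ys) (rowT (F x) ys)"

lemma run_rowT: "y \<in> set ys \<Longrightarrow> run (rowT g ys) x y = g y"
  by (induction ys) auto

lemma run_fullT: "x \<in> set xs \<Longrightarrow> y \<in> set ys \<Longrightarrow> run (fullT F xs ys) x y = F x y"
  by (induction xs) (auto simp: run_rowT)

lemma nd_exists:
  assumes "finite X" "finite Y"
  shows "\<exists>k \<pi>. nd_computes X Y F k \<pi>"
proof -
  obtain xs where xs: "set xs = X" using assms(1) finite_list by blast
  obtain ys where ys: "set ys = Y" using assms(2) finite_list by blast
  have "nd_computes X Y F 0 (\<lambda>a. fullT F xs ys)"
    unfolding nd_computes_def using xs ys by (auto simp: run_fullT)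
  then show ?thesis by blast
qed

lemma wrect_ge:
  assumes fX: "finite X" and X0: "X \<noteq> {}" and fY: "finite Y" and Y0: "Y \<noteq> {}"
    and H: "\<And>p q. prob_dist X p \<Longrightarrow> prob_dist Y q \<Longrightarrow> (\<exists>S T. mono_rect X Y F S T \<and> \<beta> \<le> sum p S * sum q T)"
  shows "\<beta> \<le> wrect X Y F"
  unfolding wrect_def
proof (rule cInf_greatest)
  have "prob_dist X (\<lambda>x. 1 / real (card X))" using fX X0 by (simp add: prob_dist_def)
  moreover have "prob_dist Y (\<lambda>x. 1 / real (card Y))" using fY Y0 by (simp add: prob_dist_def)
  ultimately show "{Max {sum p S * sum q T | S T. mono_rect X Y F S T} | p q.
                        prob_dist X p \<and> prob_dist Y q} \<noteq> {}" by blast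
next
  fix v assume "v \<in> {Max {sum p S * sum q T | S T. mono_rect X Y F S T} | p q.
                        prob_dist X p \<and> prob_dist Y q}"
  then obtain p q where pq: "prob_dist X p" "prob_dist Y q"
    and v: "v = Max {sum p S * sum q T | S T. mono_rect X Y F S T}" by blast
  obtain S T where ST: "mono_rect X Y F S T" "\<beta> \<le> sum p S * sum q T" using H[OF pq] by blast
  have "{sum p S * sum q T | S T. mono_rect X Y F S T} \<subseteq> (\<lambda>(S,T). sum p S * sum q T) ` (Pow X \<times> Pow Y)"
    by (auto simp: mono_rect_def)
  hence fin: "finite {sum p S * sum q T | S T. mono_rect X Y F S T}"
    using fX fY by (meson finite_Pow_iff finite_SigmaI finite_imageI finite_subset)
  have "sum p S * sum q T \<le> v" unfolding v using ST(1) by (intro Max_ge[OF fin]) blast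
  then show "\<beta> \<le> v" using ST(2) by linarith
qed


lemma log_bound:
  assumes "0 < \<beta>" "\<beta> \<le> w"
  shows "log 2 (1 / w) \<le> log 2 (1 / \<beta>)"
  using assms by (subst log_le_cancel_iff) (auto simp: field_simps)

theorem proposition4p1:
  shows "\<exists>C>0. \<forall>(X::nat set) (Y::nat set) (F::nat \<Rightarrow> nat \<Rightarrow> bool).
           finite X \<and> X \<noteq> {} \<and> finite Y \<and> Y \<noteq> {} \<longrightarrow>
           log 2 (1 / wrect X Y F) \<le> C * real (NCC X Y F)"
proof (intro exI[of _ 6] conjI allI impI)
  fix X Y :: "nat set" and F :: "nat \<Rightarrow> nat \<Rightarrow> bool"
  assume "finite X \<and> X \<noteq> {} \<and> finite Y \<and> Y \<noteq> {}"
  hence fX: "finite X" and X0: "X \<noteq> {}" and fY: "finite Y" and Y0: "Y \<noteq> {}" by auto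
  have "\<exists>c k \<pi>. nd_computes X Y F k \<pi> \<and> c = nd_cost k \<pi>" using nd_exists[OF fX fY] by blast
  hence "\<exists>k \<pi>. nd_computes X Y F k \<pi> \<and> NCC X Y F = nd_cost k \<pi>"
    unfolding NCC_def by (rule LeastI_ex)
  then obtain k \<pi> where comp: "nd_computes X Y F k \<pi>" and N: "NCC X Y F = nd_cost k \<pi>" by blast
  define L where "L = {a :: bool list. length a = k}"
  have fL: "finite L" and cL: "card L = 2 ^ k"
    using finite_lists_length_eq[of "UNIV :: bool set" k] card_lists_length_eq[of "UNIV :: bool set" k]
    by (auto simp: L_def)
  have L0: "L \<noteq> {}" by (auto simp: L_def intro: exI[of _ "replicate k True"])
  define h where "h = Max ((\<lambda>a. height (\<pi> a)) ` L)"
  have hle: "\<And>a. a \<in> L \<Longrightarrow> height (\<pi> a) \<le> h" unfolding h_def using fL by auto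
  have Nkh: "NCC X Y F = k + h" using N by (simp add: nd_cost_def h_def L_def)
  define R where "R = (\<Union>a\<in>L. rects (\<pi> a))"
  have fR: "finite R" unfolding R_def using fL finite_rects by blast
  have "card R \<le> (\<Sum>a\<in>L. card (rects (\<pi> a)))" unfolding R_def by (rule card_UN_le[OF fL])
  also have "\<dots> \<le> (\<Sum>a\<in>L. 2 ^ h)"
    by (intro sum_mono order.trans[OF card_rects] power_increasing hle) auto
  also have "\<dots> = 2 ^ (k + h)" using cL by (simp add: power_add)
  finally have cR: "card R \<le> 2 ^ NCC X Y F" using Nkh by simp
  have cover: "\<forall>x\<in>X. \<forall>y\<in>Y. F x y \<longleftrightarrow> (\<exists>(S,T)\<in>R. x\<in>S \<and> y\<in>T)"
    using comp unfolding nd_computes_def R_def L_def by (auto simp: run_rects)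
  show "log 2 (1 / wrect X Y F) \<le> 6 * real (NCC X Y F)"
  proof (cases "NCC X Y F = 0")
    case True
    hence k0: "k = 0" and h0: "h = 0" using Nkh by auto
    have "L = {[]}" using k0 by (auto simp: L_def)
    hence "height (\<pi> []) = 0" using h0 by (simp add: h_def)
    then obtain b where b: "\<pi> [] = Leaf b" by (cases "\<pi> []") auto
    have Fb: "\<forall>x\<in>X. \<forall>y\<in>Y. F x y = b" using comp k0 b by (auto simp: nd_computes_def)
    have "1 \<le> wrect X Y F"
    proof (rule wrect_ge[OF fX X0 fY Y0])
      fix p q assume "prob_dist X p" "prob_dist Y q"
      hence "sum p X * sum q Y = 1" by (simp add: prob_dist_def)
      moreover have "mono_rect X Y F X Y" using Fb by (auto simp: mono_rect_def)
      ultimately show "\<exists>S T. mono_rect X Y F S T \<and> 1 \<le> sum p S * sum q T" by force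
    qed
    from log_bound[OF _ this] True show ?thesis by simp
  next
    case False
    define n :: nat where "n = 2 ^ NCC X Y F"
    have n1: "n \<ge> 1" by (simp add: n_def)
    have "1 / (16 * real n ^ 2) \<le> wrect X Y F"
      by (rule wrect_ge[OF fX X0 fY Y0], rule big_rect[OF fX fY _ _ fR _ n1 cover])
         (use cR in \<open>auto simp: n_def\<close>)
    from log_bound[OF _ this] have "log 2 (1 / wrect X Y F) \<le> log 2 (16 * real n ^ 2)"
      using n1 by simp
    also have "16 * real n ^ 2 = 2 ^ (2 * NCC X Y F + 4)"
      by (simp add: n_def power_add power_mult[symmetric] mult.commute)
    also have "log 2 (2 ^ (2 * NCC X Y F + 4)) = real (2 * NCC X Y F + 4)"
      by (simp add: log_nat_power)
    finally show ?thesis using False by simp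
  qed
qed simp

end
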